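(* The function $q\mapsto (p(q)-c)\big(1-F(p(q)/q)\big)$ is strictly increasing on $Q$.
   Context: Let $0<q_\ell<q_h<\infty$, $Q=[q_\ell,q_h]$, and let $c$ be a real number with $0<c<q_\ell$. Let $F$ be a probability distribution on $[0,1]$ with support $[0,1]$ admitting a twice continuously differentiable density $f:(0,1)\to\mathbb{R}_{>0}$. Define $r(v)=(1-F(v))/f(v)$ and $\psi(v)=v-r(v)$ on $(0,1)$, and assume $\psi'(v)>0$ whenever $\psi(v)>0$. For $q\in Q$, $p(q)$ is the unique maximizer over $p\in\mathbb{R}$ of $(p-c)\big(1-F(p/q)\big)$. *)

theory Defs
  imports "HOL-Analysis.Analysis"
begin

definition is_cdf_with_density :: "(real \<Rightarrow> real) \<Rightarrow> (real \<Rightarrow> real) \<Rightarrow> bool" where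
  "is_cdf_with_density F f \<longleftrightarrow>
     (\<forall>x. x \<le> 0 \<longrightarrow> F x = 0) \<and> (\<forall>x. x \<ge> 1 \<longrightarrow> F x = 1) \<and>
     continuous_on {0..1} F \<and>
     (\<forall>v\<in>{0<..<1}. (F has_real_derivative f v) (at v)) \<and>
     (\<forall>v\<in>{0<..<1}. f v > 0)"

definition C2_on_open :: "(real \<Rightarrow> real) \<Rightarrow> real set \<Rightarrow> bool" where
  "C2_on_open f S \<longleftrightarrow> (\<exists>f1 f2.
     (\<forall>v\<in>S. (f has_real_derivative f1 v) (at v)) \<and>
     (\<forall>v\<in>S. (f1 has_real_derivative f2 v) (at v)) \<and>
     continuous_on S f2)"

definition hazard_inv :: "(real \<Rightarrow> real) \<Rightarrow> (real \<Rightarrow> real) \<Rightarrow> real \<Rightarrow> real" where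
  "hazard_inv F f v = (1 - F v) / f v"

definition virt_val :: "(real \<Rightarrow> real) \<Rightarrow> (real \<Rightarrow> real) \<Rightarrow> real \<Rightarrow> real" where
  "virt_val F f v = v - hazard_inv F f v"

definition profit :: "(real \<Rightarrow> real) \<Rightarrow> real \<Rightarrow> real \<Rightarrow> real \<Rightarrow> real" where
  "profit F c q p = (p - c) * (1 - F (p / q))"

definition opt_price :: "(real \<Rightarrow> real) \<Rightarrow> real \<Rightarrow> real \<Rightarrow> real" where
  "opt_price F c q = (THE p. \<forall>p'. p' \<noteq> p \<longrightarrow> profit F c q p' < profit F c q p)"

end

theory Submission
  imports Defs
begin

lemma F_lt1:
  assumes cdf: "is_cdf_with_density F f" and x: "x < 1"
  shows "F x < 1"
proof (cases "x \<le> 0")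
  case True then show ?thesis using cdf unfolding is_cdf_with_density_def by auto
next
  case False
  have "F x < F 1"
  proof (rule DERIV_pos_imp_increasing_open[OF x])
    fix y assume "x < y" "y < 1"
    then have "y \<in> {0<..<1}" using False by auto
    then show "\<exists>d. DERIV F y :> d \<and> d > 0" using cdf unfolding is_cdf_with_density_def by blast
  next
    show "continuous_on {x..1} F"
      using cdf False unfolding is_cdf_with_density_def by (auto intro: continuous_on_subset)
  qed
  then show ?thesis using cdf unfolding is_cdf_with_density_def by auto
qed

lemma F_le1:
  assumes cdf: "is_cdf_with_density F f"
  shows "F x \<le> 1"
  using F_lt1[OF cdf, of x] cdf unfolding is_cdf_with_density_def
  by (cases "x < 1") auto

lemma profit_le0:
  assumes cdf: "is_cdf_with_density F f" and "p \<le> c"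
  shows "profit F c q p \<le> 0"
  unfolding profit_def using F_le1[OF cdf, of "p/q"] assms(2)
  by (simp add: mult_nonpos_nonneg)

lemma profit_ge_q:
  assumes cdf: "is_cdf_with_density F f" and "q > 0" "p \<ge> q"
  shows "profit F c q p = 0"
proof -
  have "p / q \<ge> 1" using assms by simp
  then show ?thesis unfolding profit_def using cdf unfolding is_cdf_with_density_def by auto
qed

lemma profit_pos:
  assumes cdf: "is_cdf_with_density F f" and "q > 0" "c < p" "p < q"
  shows "profit F c q p > 0"
proof -
  have "p / q < 1" using assms by simp
  then have "F (p/q) < 1" using F_lt1[OF cdf] by auto
  then show ?thesis unfolding profit_def using assms by simp
qed

lemma psi_deriv:
  assumes cdf: "is_cdf_with_density F f" and C2: "C2_on_open f {0<..<1}"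
    and v: "v \<in> {0<..<1}"
  shows "(virt_val F f has_real_derivative deriv (virt_val F f) v) (at v)"
proof -
  obtain f1 where f1: "\<forall>v\<in>{0<..<1}. (f has_real_derivative f1 v) (at v)"
    using C2 unfolding C2_on_open_def by blast
  have dF: "(F has_real_derivative f v) (at v)" and fp: "f v > 0"
    using cdf v unfolding is_cdf_with_density_def by auto
  have "((\<lambda>v. v - (1 - F v) / f v) has_real_derivative
      1 - ((0 - f v) * f v - (1 - F v) * f1 v) / (f v * f v)) (at v)"
    using fp f1 v dF
    by (intro DERIV_diff DERIV_divide DERIV_ident) (auto intro!: derivative_eq_intros)
  then have "virt_val F f differentiable (at v)"
    unfolding virt_val_def[abs_def] hazard_inv_def real_differentiable_def by blast
  then show ?thesis using DERIV_deriv_iff_real_differentiable by blast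
qed

lemma psi_unique:
  assumes cdf: "is_cdf_with_density F f" and C2: "C2_on_open f {0<..<1}"
    and mono: "\<forall>v\<in>{0<..<1}. virt_val F f v > 0 \<longrightarrow> deriv (virt_val F f) v > 0"
    and v1: "v1 \<in> {0<..<1}" and v2: "v2 \<in> {0<..<1}" and lt: "v1 < v2"
    and eq: "virt_val F f v1 = k" "virt_val F f v2 = k" and k: "k > 0"
  shows False
proof -
  define \<psi> where "\<psi> = virt_val F f"
  have D: "\<And>v. v \<in> {0<..<1} \<Longrightarrow> (\<psi> has_real_derivative deriv \<psi> v) (at v)"
    unfolding \<psi>_def using psi_deriv[OF cdf C2] by blast
  have "deriv \<psi> v1 > 0" using mono v1 eq k unfolding \<psi>_def by auto
  then obtain d where d: "d > 0" "\<forall>h>0. h < d \<longrightarrow> \<psi> v1 < \<psi> (v1 + h)"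
    using DERIV_pos_inc_right[OF D[OF v1]] by blast
  define h where "h = min (d/2) ((v2 - v1)/2)"
  have "h \<le> d/2" unfolding h_def by (rule min.cobounded1)
  moreover have "h \<le> (v2 - v1)/2" unfolding h_def by (rule min.cobounded2)
  moreover have "h > 0" unfolding h_def using d lt by simp
  ultimately have hh: "h \<le> d/2" "h \<le> (v2 - v1)/2" "h > 0" by auto
  have "2 * h \<le> v2 - v1" using hh(2) by simp
  then have h: "h > 0" "h < d" "v1 + h < v2" using hh d lt by linarith+
  have big: "\<psi> (v1 + h) > k" using d h eq unfolding \<psi>_def by auto
  have cont: "continuous_on {v1..v2} \<psi>"
  proof (rule continuous_at_imp_continuous_on, intro ballI)
    fix x assume "x \<in> {v1..v2}"
    then have "x \<in> {0<..<1}" using v1 v2 by auto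
    then show "isCont \<psi> x" using D DERIV_isCont by blast
  qed
  obtain M where M: "M \<in> {v1..v2}" "\<forall>y\<in>{v1..v2}. \<psi> y \<le> \<psi> M"
    using continuous_attains_sup[OF compact_Icc _ cont] lt by auto
  have "\<psi> M \<ge> \<psi> (v1 + h)" using M h by auto
  then have PM: "\<psi> M > k" using big by linarith
  then have "M \<noteq> v1" "M \<noteq> v2" using eq unfolding \<psi>_def by auto
  then have Mi: "v1 < M" "M < v2" using M by auto
  then have M01: "M \<in> {0<..<1}" using v1 v2 by auto
  have "deriv \<psi> M = 0"
  proof (rule DERIV_local_max[OF D[OF M01], of "min (M - v1) (v2 - M)"])
    show "0 < min (M - v1) (v2 - M)" using Mi by auto
    show "\<forall>y. \<bar>M - y\<bar> < min (M - v1) (v2 - M) \<longrightarrow> \<psi> y \<le> \<psi> M"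
      using M(2) by (auto simp: abs_if split: if_splits)
  qed
  moreover have "deriv \<psi> M > 0" using mono M01 PM k unfolding \<psi>_def by auto
  ultimately show False by simp
qed

lemma critical:
  assumes cdf: "is_cdf_with_density F f" and q: "q > 0"
    and p: "c < p" "p < q" and c: "c > 0"
    and mx: "\<forall>p'. profit F c q p' \<le> profit F c q p"
  shows "virt_val F f (p/q) = c/q"
proof -
  have v: "p/q \<in> {0<..<1}" using p q c by auto
  have dF: "(F has_real_derivative f (p/q)) (at (p/q))" and fp: "f (p/q) > 0"
    using cdf v unfolding is_cdf_with_density_def by auto
  have dFq: "((\<lambda>x. F (x/q)) has_real_derivative f (p/q) * (1/q)) (at p)"
  proof -
    have dg: "((\<lambda>x. x/q) has_real_derivative 1/q) (at p)"
      using q by (auto intro!: derivative_eq_intros)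
    show ?thesis by (rule DERIV_chain2[OF _ dg]) (simp add: dF)
  qed
  have "((\<lambda>x. (x - c) * (1 - F (x/q))) has_real_derivative
      (p - c) * (0 - f (p/q) * (1/q)) + 1 * (1 - F (p/q))) (at p)"
    using dFq by (auto intro!: derivative_eq_intros)
  then have "(p - c) * (0 - f (p/q) * (1/q)) + 1 * (1 - F (p/q)) = 0"
    by (rule DERIV_local_max[of _ _ _ 1]) (use mx in \<open>auto simp: profit_def\<close>)
  then have "1 - F (p/q) = (p - c) * f (p/q) / q" by simp
  then have "(1 - F (p/q)) / f (p/q) = (p - c) / q" using fp q by (simp add: field_simps)
  then show ?thesis unfolding virt_val_def hazard_inv_def using q by (simp add: field_simps)
qed

lemma opt_price_props:
  assumes cdf: "is_cdf_with_density F f" and C2: "C2_on_open f {0<..<1}"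
    and mono: "\<forall>v\<in>{0<..<1}. virt_val F f v > 0 \<longrightarrow> deriv (virt_val F f) v > 0"
    and c: "0 < c" "c < q"
  shows "c < opt_price F c q \<and> opt_price F c q < q \<and>
    (\<forall>p'. profit F c q p' \<le> profit F c q (opt_price F c q))"
proof -
  have q: "q > 0" using c by auto
  have contF: "continuous_on {0..1} F" using cdf unfolding is_cdf_with_density_def by auto
  have cont: "continuous_on {c..q} (profit F c q)"
  proof -
    have "continuous_on {c..q} (\<lambda>x. x / q)" using q by (intro continuous_intros) auto
    moreover have "(\<lambda>x. x / q) ` {c..q} \<subseteq> {0..1}" using c by auto
    ultimately have "continuous_on {c..q} (\<lambda>x. F (x / q))"
      using continuous_on_compose2[OF contF] by blast
    then show ?thesis unfolding profit_def[abs_def] by (intro continuous_intros)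
  qed
  obtain p0 where p0: "p0 \<in> {c..q}" "\<forall>y\<in>{c..q}. profit F c q y \<le> profit F c q p0"
    using continuous_attains_sup[OF compact_Icc _ cont] c by auto
  have "profit F c q ((c+q)/2) > 0" using profit_pos[OF cdf q] c by auto
  moreover have "(c+q)/2 \<in> {c..q}" using c by auto
  ultimately have pos: "profit F c q p0 > 0" using p0 by (meson less_le_trans)
  have all: "\<forall>p'. profit F c q p' \<le> profit F c q p0"
  proof
    fix p'
    show "profit F c q p' \<le> profit F c q p0"
    proof (cases "p' \<in> {c..q}")
      case True then show ?thesis using p0 by auto
    next
      case False
      then have "p' \<le> c \<or> p' \<ge> q" by auto
      then have "profit F c q p' \<le> 0" using profit_le0[OF cdf] profit_ge_q[OF cdf q] by force
      then show ?thesis using pos by linarith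
    qed
  qed
  have inside: "c < p \<and> p < q" if "\<forall>p'. profit F c q p' \<le> profit F c q p" for p
  proof -
    have "profit F c q p > 0" using that pos by (meson less_le_trans)
    then show ?thesis using profit_le0[OF cdf, of p c q] profit_ge_q[OF cdf q, of p c]
      by (cases "p \<le> c"; cases "p \<ge> q") auto
  qed
  have strict: "\<forall>p'. p' \<noteq> p0 \<longrightarrow> profit F c q p' < profit F c q p0"
  proof (intro allI impI)
    fix p' assume ne: "p' \<noteq> p0"
    show "profit F c q p' < profit F c q p0"
    proof (rule ccontr)
      assume "\<not> ?thesis"
      then have "profit F c q p' = profit F c q p0" using all by (meson not_less order_antisym)
      then have all': "\<forall>x. profit F c q x \<le> profit F c q p'" using all by simp
      have i0: "c < p0" "p0 < q" using inside[OF all] by auto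
      have i1: "c < p'" "p' < q" using inside[OF all'] by auto
      have e0: "virt_val F f (p0/q) = c/q" by (rule critical[OF cdf q i0 c(1) all])
      have e1: "virt_val F f (p'/q) = c/q" by (rule critical[OF cdf q i1 c(1) all'])
      have r0: "p0/q \<in> {0<..<1}" and r1: "p'/q \<in> {0<..<1}" using i0 i1 c by auto
      have cq: "c/q > 0" using c by auto
      have "p0/q \<noteq> p'/q" using ne q by auto
      then consider "p0/q < p'/q" | "p'/q < p0/q" by linarith
      then show False
      proof cases
        case 1 show False by (rule psi_unique[OF cdf C2 mono r0 r1 1 e0 e1 cq])
      next
        case 2 show False by (rule psi_unique[OF cdf C2 mono r1 r0 2 e1 e0 cq])
      qed
    qed
  qed
  have "opt_price F c q = p0"
    unfolding opt_price_def
  proof (rule the_equality)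
    show "\<forall>p'. p' \<noteq> p0 \<longrightarrow> profit F c q p' < profit F c q p0" by (rule strict)
  next
    fix p assume h: "\<forall>p'. p' \<noteq> p \<longrightarrow> profit F c q p' < profit F c q p"
    show "p = p0"
    proof (rule ccontr)
      assume "p \<noteq> p0"
      then show False using h strict by (metis less_asym)
    qed
  qed
  then show ?thesis using all inside[OF all] by simp
qed

theorem lemma14:
  fixes F f :: "real \<Rightarrow> real" and ql qh c :: real
  assumes "0 < ql" and "ql < qh"
    and "0 < c" and "c < ql"
    and "is_cdf_with_density F f"
    and "C2_on_open f {0<..<1}"
    and "\<forall>v\<in>{0<..<1}. virt_val F f v > 0 \<longrightarrow> deriv (virt_val F f) v > 0"
  shows "strict_mono_on {ql..qh} (\<lambda>q. (opt_price F c q - c) * (1 - F (opt_price F c q / q)))"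
proof (rule strict_mono_onI)
  fix q1 q2 assume q1: "q1 \<in> {ql..qh}" and q2: "q2 \<in> {ql..qh}" and lt: "q1 < q2"
  define p1 where "p1 = opt_price F c q1"
  define p2 where "p2 = opt_price F c q2"
  have c1: "c < q1" and c2: "c < q2" using q1 q2 assms by auto
  have P1: "c < p1" "p1 < q1" using opt_price_props[OF assms(5,6,7) assms(3) c1] unfolding p1_def by auto
  have P2: "\<forall>p'. profit F c q2 p' \<le> profit F c q2 p2"
    using opt_price_props[OF assms(5,6,7) assms(3) c2] unfolding p2_def by auto
  have q1p: "q1 > 0" using c1 assms by auto
  have "F (p1/q1) < 1" using F_lt1[OF assms(5)] P1 q1p by auto
  then have g: "1 - F (p1/q1) > 0" by simp
  have "p1 * q2 / q1 - c > p1 - c"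
  proof -
    have "p1 * q2 > p1 * q1" using P1 assms lt by (intro mult_strict_left_mono) auto
    then have "p1 * q2 / q1 > p1" using q1p by (simp add: field_simps)
    then show ?thesis by simp
  qed
  then have "(p1 - c) * (1 - F (p1/q1)) < (p1 * q2 / q1 - c) * (1 - F (p1/q1))"
    using g by (intro mult_strict_right_mono) auto
  also have "\<dots> = profit F c q2 (p1 * q2 / q1)"
    unfolding profit_def using q1p c2 assms(3) by (simp add: field_simps)
  also have "\<dots> \<le> profit F c q2 p2" using P2 by blast
  finally show "(opt_price F c q1 - c) * (1 - F (opt_price F c q1 / q1))
      < (opt_price F c q2 - c) * (1 - F (opt_price F c q2 / q2))"
    unfolding p1_def p2_def profit_def .
qed

end
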